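(* Let $q$ be a prime power and let $ER(q)$ be the Erdős–Rényi graph. Then every independent set $S$ of $ER(q)$ satisfies \[ |S|\le \frac{\sqrt q+\sqrt{q+4(q+1)\frac{q+\sqrt q+1}{q^2+q+1}}}{2\,\frac{q+\sqrt q+1}{q^2+q+1}}. \]
   Context: Let $V=\mathbb F_q^3$. The vertices of $ER(q)$ are the $q^2+q+1$ one-dimensional subspaces of $V$ (points of $PG(2,q)$); points spanned by $x$ and $y$ are adjacent iff $x^Ty=0$. The $q+1$ points with $x^Tx=0$ are adjacent to themselves (carry loops). An independent set is a set of vertices no two distinct members of which are adjacent; looped vertices may belong to it. *)

theory Defs
  imports Complex_Main
begin

definition smult3 :: "'a::field \<Rightarrow> 'a \<times> 'a \<times> 'a \<Rightarrow> 'a \<times> 'a \<times> 'a" where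
  "smult3 c v = (case v of (a, b, d) \<Rightarrow> (c * a, c * b, c * d))"

definition dot3 :: "'a::field \<times> 'a \<times> 'a \<Rightarrow> 'a \<times> 'a \<times> 'a \<Rightarrow> 'a" where
  "dot3 x y = (case x of (a1, a2, a3) \<Rightarrow> case y of (b1, b2, b3) \<Rightarrow> a1 * b1 + a2 * b2 + a3 * b3)"

definition span1 :: "'a::field \<times> 'a \<times> 'a \<Rightarrow> ('a \<times> 'a \<times> 'a) set" where
  "span1 x = {smult3 c x | c. True}"

definition er_vertices :: "('a::field \<times> 'a \<times> 'a) set set" where
  "er_vertices = {span1 x | x. x \<noteq> (0, 0, 0)}"

definition er_adj :: "('a::field \<times> 'a \<times> 'a) set \<Rightarrow> ('a \<times> 'a \<times> 'a) set \<Rightarrow> bool" where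
  "er_adj P Q = (\<exists>x y. x \<noteq> (0, 0, 0) \<and> y \<noteq> (0, 0, 0) \<and> P = span1 x \<and> Q = span1 y \<and> dot3 x y = 0)"

text \<open>Independent set: no two distinct members adjacent; looped vertices allowed.\<close>
definition er_independent :: "('a::field \<times> 'a \<times> 'a) set set \<Rightarrow> bool" where
  "er_independent S = (S \<subseteq> er_vertices \<and> (\<forall>P\<in>S. \<forall>Q\<in>S. P \<noteq> Q \<longrightarrow> \<not> er_adj P Q))"

end

theory Submission imports Defs begin


abbreviation "z3 \<equiv> (0,0,0)"

lemma smult3_simp[simp]: "smult3 c (a,b,d) = (c*a, c*b, c*d)" by (simp add: smult3_def)
lemma dot3_simp[simp]: "dot3 (a1,a2,a3) (b1,b2,b3) = a1*b1+a2*b2+a3*b3" by (simp add: dot3_def)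

lemma dot3_comm: "dot3 x y = dot3 y x"
  by (cases x; cases y) (simp add: mult.commute)
lemma dot3_smult_left: "dot3 (smult3 c x) y = c * dot3 x y"
  by (cases x; cases y) (simp add: algebra_simps)
lemma dot3_smult_right: "dot3 x (smult3 c y) = c * dot3 x y"
  by (cases x; cases y) (simp add: algebra_simps)
lemma smult3_eq0: "smult3 c x = z3 \<longleftrightarrow> c = 0 \<or> x = z3" by (cases x) auto
lemma smult3_smult3: "smult3 c (smult3 d x) = smult3 (c*d) x" by (cases x) (simp add: algebra_simps)
lemma smult3_one[simp]: "smult3 1 x = x" by (cases x) simp
lemma in_span1_self: "x \<in> span1 x" unfolding span1_def by (auto intro!: exI[of _ 1])

lemma span1_eq_iff:
  assumes "x \<noteq> z3"
  shows "span1 x = span1 y \<longleftrightarrow> (\<exists>c. c \<noteq> 0 \<and> y = smult3 c x)"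
proof
  assume h: "span1 x = span1 y"
  then have "y \<in> span1 x" using in_span1_self by blast
  then obtain c where c: "y = smult3 c x" unfolding span1_def by auto
  have "c \<noteq> 0"
  proof
    assume "c = 0"
    then have "y = z3" using c by (cases x) simp
    then have "span1 y = {z3}" unfolding span1_def by auto
    then show False using h in_span1_self[of x] assms by auto
  qed
  then show "\<exists>c. c \<noteq> 0 \<and> y = smult3 c x" using c by blast
next
  assume "\<exists>c. c \<noteq> 0 \<and> y = smult3 c x"
  then obtain c where c: "c \<noteq> 0" "y = smult3 c x" by blast
  show "span1 x = span1 y"
  proof (rule set_eqI)
    fix v
    show "v \<in> span1 x \<longleftrightarrow> v \<in> span1 y"
    proof
      assume "v \<in> span1 x"
      then obtain d where "v = smult3 d x" unfolding span1_def by auto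
      then have "v = smult3 (d / c) y" using c by (simp add: smult3_smult3)
      then show "v \<in> span1 y" unfolding span1_def by auto
    next
      assume "v \<in> span1 y"
      then obtain d where "v = smult3 d y" unfolding span1_def by auto
      then have "v = smult3 (d * c) x" using c by (simp add: smult3_smult3)
      then show "v \<in> span1 x" unfolding span1_def by auto
    qed
  qed
qed

lemma adj_iff:
  assumes "x \<noteq> z3" "y \<noteq> z3"
  shows "er_adj (span1 x) (span1 y) \<longleftrightarrow> dot3 x y = 0"
proof
  assume "er_adj (span1 x) (span1 y)"
  then obtain x' y' where h: "x' \<noteq> z3" "y' \<noteq> z3" "span1 x = span1 x'" "span1 y = span1 y'" "dot3 x' y' = 0"
    unfolding er_adj_def by blast
  obtain c where "x = smult3 c x'" using h(1,3) span1_eq_iff by metis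
  moreover obtain d where "y = smult3 d y'" using h(2,4) span1_eq_iff by metis
  ultimately show "dot3 x y = 0" using h(5) by (simp add: dot3_smult_left dot3_smult_right)
next
  assume "dot3 x y = 0"
  then show "er_adj (span1 x) (span1 y)" using assms unfolding er_adj_def by blast
qed

lemma er_adj_sym: "er_adj P Q = er_adj Q P"
  unfolding er_adj_def by (metis dot3_comm)

lemma vert_iff: "P \<in> er_vertices \<longleftrightarrow> (\<exists>x. x \<noteq> z3 \<and> P = span1 x)"
  unfolding er_vertices_def by blast

definition cross3 :: "'a::field \<times> 'a \<times> 'a \<Rightarrow> 'a \<times> 'a \<times> 'a \<Rightarrow> 'a \<times> 'a \<times> 'a" where
  "cross3 x y = (case x of (a1,a2,a3) \<Rightarrow> case y of (b1,b2,b3) \<Rightarrow>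
     (a2*b3 - a3*b2, a3*b1 - a1*b3, a1*b2 - a2*b1))"

lemma cross3_simp[simp]: "cross3 (a1,a2,a3) (b1,b2,b3) = (a2*b3 - a3*b2, a3*b1 - a1*b3, a1*b2 - a2*b1)"
  by (simp add: cross3_def)

lemma dot_cross1: "dot3 x (cross3 x y) = 0"
  by (cases x; cases y) (simp add: algebra_simps)
lemma dot_cross2: "dot3 y (cross3 x y) = 0"
  by (cases x; cases y) (simp add: algebra_simps)

lemma par:
  assumes "c \<noteq> z3" "cross3 z c = z3"
  shows "\<exists>l. z = smult3 l c"
proof -
  obtain c1 c2 c3 where cc: "c = (c1,c2,c3)" by (cases c)
  obtain z1 z2 z3 where zz: "z = (z1,z2,z3)" by (cases z)
  have e: "z2*c3 = z3*c2" "z3*c1 = z1*c3" "z1*c2 = z2*c1" using assms(2) cc zz by auto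
  consider "c1 \<noteq> 0" | "c2 \<noteq> 0" | "c3 \<noteq> 0" using assms(1) cc by auto
  then show ?thesis
  proof cases
    case 1
    have "z = smult3 (z1/c1) c" using 1 e cc zz by (auto simp: field_simps)
    then show ?thesis by blast
  next
    case 2
    have "z = smult3 (z2/c2) c" using 2 e cc zz by (auto simp: field_simps)
    then show ?thesis by blast
  next
    case 3
    have "z = smult3 (z3/c3) c" using 3 e cc zz by (auto simp: field_simps)
    then show ?thesis by blast
  qed
qed

lemma triple_cross:
  assumes "dot3 z x = 0" "dot3 z y = 0"
  shows "cross3 z (cross3 x y) = z3"
proof -
  obtain x1 x2 x3 where xx: "x = (x1,x2,x3)" by (cases x)
  obtain y1 y2 y3 where yy: "y = (y1,y2,y3)" by (cases y)
  obtain z1 z2 z3 where zz: "z = (z1,z2,z3)" by (cases z)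
  have a: "z1*x1+z2*x2+z3*x3 = 0" "z1*y1+z2*y2+z3*y3 = 0" using assms xx yy zz by auto
  have "cross3 z (cross3 x y) = (x1 * (z1*y1+z2*y2+z3*y3) - y1 * (z1*x1+z2*x2+z3*x3),
      x2 * (z1*y1+z2*y2+z3*y3) - y2 * (z1*x1+z2*x2+z3*x3), x3 * (z1*y1+z2*y2+z3*y3) - y3 * (z1*x1+z2*x2+z3*x3))"
    using xx yy zz by (simp add: algebra_simps)
  then show ?thesis using a by simp
qed

lemma cross_zero_par:
  assumes "x \<noteq> z3" "cross3 x y = z3"
  shows "\<exists>l. y = smult3 l x"
proof -
  have "cross3 y x = z3" using assms(2) by (cases x; cases y) (auto simp: algebra_simps)
  then show ?thesis using par assms(1) by blast
qed




lemma card_U: "card {y::'a::{finite,field}\<times>'a\<times>'a. y \<noteq> z3} = card (UNIV::'a set)^3 - 1"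
proof -
  have "card (UNIV::('a\<times>'a\<times>'a) set) = card (UNIV::'a set)^3"
    by (simp add: UNIV_Times_UNIV[symmetric] card_cartesian_product del: UNIV_Times_UNIV) (simp add: power3_eq_cube)
  moreover have "{y::'a\<times>'a\<times>'a. y \<noteq> z3} = UNIV - {z3}" by auto
  ultimately show ?thesis by simp
qed

lemma card_UNIV2: "card (UNIV::('a::finite\<times>'a) set) = card (UNIV::'a set)^2"
  by (simp add: UNIV_Times_UNIV[symmetric] card_cartesian_product del: UNIV_Times_UNIV) (simp add: power2_eq_square)

lemma card_ker:
  fixes x :: "'a::{finite,field}\<times>'a\<times>'a"
  assumes "x \<noteq> z3"
  shows "card {y. dot3 x y = 0} = card (UNIV::'a set)^2"
proof -
  obtain a1 a2 a3 where xx: "x = (a1,a2,a3)" by (cases x)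
  let ?K = "{y. dot3 x y = 0}"
  consider "a1 \<noteq> 0" | "a2 \<noteq> 0" | "a3 \<noteq> 0" using assms xx by auto
  then show ?thesis
  proof cases
    case 1
    let ?g = "\<lambda>(y1::'a,y2::'a,y3::'a). (y2,y3)"
    have "inj_on ?g ?K" using 1 xx by (auto simp: inj_on_def) (metis add.commute add_left_imp_eq mult_cancel_left)
    moreover have "?g ` ?K = UNIV"
    proof (rule set_eqI, rule iffI)
      fix p :: "'a\<times>'a" assume "p \<in> UNIV"
      obtain b c where p: "p = (b,c)" by (cases p)
      have "(-(a2*b+a3*c)/a1, b, c) \<in> ?K" using 1 xx by (simp add: field_simps)
      then show "p \<in> ?g ` ?K" using p by force
    qed auto
    ultimately show ?thesis by (metis card_image card_UNIV2)
  next
    case 2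
    let ?g = "\<lambda>(y1::'a,y2::'a,y3::'a). (y1,y3)"
    have "inj_on ?g ?K" using 2 xx by (auto simp: inj_on_def) (metis add.commute add_left_imp_eq mult_cancel_left)
    moreover have "?g ` ?K = UNIV"
    proof (rule set_eqI, rule iffI)
      fix p :: "'a\<times>'a" assume "p \<in> UNIV"
      obtain b c where p: "p = (b,c)" by (cases p)
      have "(b, -(a1*b+a3*c)/a2, c) \<in> ?K" using 2 xx by (simp add: field_simps)
      then show "p \<in> ?g ` ?K" using p by force
    qed auto
    ultimately show ?thesis by (metis card_image card_UNIV2)
  next
    case 3
    let ?g = "\<lambda>(y1::'a,y2::'a,y3::'a). (y1,y2)"
    have "inj_on ?g ?K" using 3 xx by (auto simp: inj_on_def) (metis add.commute add_left_imp_eq mult_cancel_left)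
    moreover have "?g ` ?K = UNIV"
    proof (rule set_eqI, rule iffI)
      fix p :: "'a\<times>'a" assume "p \<in> UNIV"
      obtain b c where p: "p = (b,c)" by (cases p)
      have "(b, c, -(a1*b+a2*c)/a3) \<in> ?K" using 3 xx by (simp add: field_simps)
      then show "p \<in> ?g ` ?K" using p by force
    qed auto
    ultimately show ?thesis by (metis card_image card_UNIV2)
  qed
qed

lemma card_fiber:
  fixes x :: "'a::{finite,field}\<times>'a\<times>'a"
  assumes "x \<noteq> z3"
  shows "card {y. y \<noteq> z3 \<and> span1 y = span1 x} = card (UNIV::'a set) - 1"
proof -
  have "{y. y \<noteq> z3 \<and> span1 y = span1 x} = (\<lambda>c. smult3 c x) ` (UNIV - {0})"
  proof (rule set_eqI, rule iffI)
    fix y assume "y \<in> {y. y \<noteq> z3 \<and> span1 y = span1 x}"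
    then obtain c where "c \<noteq> 0" "y = smult3 c x" using span1_eq_iff[OF assms, of y] by auto
    then show "y \<in> (\<lambda>c. smult3 c x) ` (UNIV - {0})" by auto
  next
    fix y assume "y \<in> (\<lambda>c. smult3 c x) ` (UNIV - {0})"
    then obtain c where c: "c \<noteq> 0" "y = smult3 c x" by auto
    then have "y \<noteq> z3" using assms smult3_eq0 by metis
    moreover have "span1 x = span1 y" using span1_eq_iff[OF assms] c by blast
    ultimately show "y \<in> {y. y \<noteq> z3 \<and> span1 y = span1 x}" by simp
  qed
  moreover have "inj_on (\<lambda>c. smult3 c x) (UNIV - {0})"
  proof (rule inj_onI)
    fix c d assume "smult3 c x = smult3 d x"
    then show "c = d" using assms by (cases x) auto
  qed
  ultimately show ?thesis by (simp add: card_image)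
qed

lemma fiber_sum:
  fixes g :: "('a::{finite,field}\<times>'a\<times>'a) set \<Rightarrow> real"
  shows "(\<Sum>y\<in>{y. y \<noteq> z3}. g (span1 y)) = (real (card (UNIV::'a set)) - 1) * (\<Sum>P\<in>er_vertices. g P)"
proof -
  let ?U = "{y::'a\<times>'a\<times>'a. y \<noteq> z3}"
  have "(\<Sum>y\<in>?U. g (span1 y)) = (\<Sum>P\<in>er_vertices. \<Sum>y\<in>{y. y \<in> ?U \<and> span1 y = P}. g (span1 y))"
    by (rule sum.group[symmetric]) (auto simp: er_vertices_def)
  also have "\<dots> = (\<Sum>P\<in>er_vertices. (real (card (UNIV::'a set)) - 1) * g P)"
  proof (rule sum.cong[OF refl])
    fix P assume "P \<in> (er_vertices :: ('a\<times>'a\<times>'a) set set)"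
    then obtain x where x: "x \<noteq> z3" "P = span1 x" by (auto simp: vert_iff)
    have "(\<Sum>y\<in>{y. y \<in> ?U \<and> span1 y = P}. g (span1 y)) = (\<Sum>y\<in>{y. y \<in> ?U \<and> span1 y = P}. g P)"
      by (rule sum.cong) auto
    also have "\<dots> = real (card {y. y \<noteq> z3 \<and> span1 y = span1 x}) * g P" using x by simp
    also have "\<dots> = (real (card (UNIV::'a set)) - 1) * g P"
      using card_fiber[OF x(1)] finite_UNIV_card_ge_0[where 'a='a] by (simp add: of_nat_diff Suc_le_eq)
    finally show "(\<Sum>y\<in>{y. y \<in> ?U \<and> span1 y = P}. g (span1 y)) = (real (card (UNIV::'a set)) - 1) * g P" .
  qed
  finally show ?thesis by (simp add: sum_distrib_left)
qed




lemma sum_ind: "finite A \<Longrightarrow> (\<Sum>x\<in>A. if P x then 1 else 0::real) = real (card {x\<in>A. P x})"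
  by (simp add: sum.inter_filter[symmetric])

lemma q_ge2: "card (UNIV::'a::{finite,field} set) \<ge> 2"
proof -
  have "{0::'a, 1} \<subseteq> UNIV" by simp
  then have "card {0::'a,1} \<le> card (UNIV::'a set)" by (rule card_mono[OF finite_UNIV])
  then show ?thesis by simp
qed

lemma card_V: "real (card (er_vertices :: ('a::{finite,field}\<times>'a\<times>'a) set set))
   = real (card (UNIV::'a set))^2 + real (card (UNIV::'a set)) + 1"
proof -
  let ?q = "real (card (UNIV::'a set))"
  have "(\<Sum>y\<in>{y::'a\<times>'a\<times>'a. y \<noteq> z3}. (\<lambda>P. 1::real) (span1 y)) = (?q - 1) * (\<Sum>P\<in>(er_vertices:: ('a\<times>'a\<times>'a) set set). 1)"
    by (rule fiber_sum)
  then have "real (card {y::'a\<times>'a\<times>'a. y \<noteq> z3}) = (?q - 1) * real (card (er_vertices:: ('a\<times>'a\<times>'a) set set))"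
    by simp
  moreover have "real (card {y::'a\<times>'a\<times>'a. y \<noteq> z3}) = ?q^3 - 1"
    using card_U[where 'a='a] q_ge2[where 'a='a] by (simp add: of_nat_diff)
  moreover have "?q - 1 > 0" using q_ge2[where 'a='a] by simp
  moreover have "?q^3 - 1 = (?q - 1) * (?q^2 + ?q + 1)" by (simp add: algebra_simps power2_eq_square power3_eq_cube)
  ultimately show ?thesis by simp
qed


lemma deg:
  fixes x :: "'a::{finite,field}\<times>'a\<times>'a"
  assumes "x \<noteq> z3"
  shows "real (card {Q\<in>er_vertices. er_adj (span1 x) Q}) = real (card (UNIV::'a set)) + 1"
proof -
  let ?q = "real (card (UNIV::'a set))"
  let ?U = "{y::'a\<times>'a\<times>'a. y \<noteq> z3}"
  have "(\<Sum>y\<in>?U. (\<lambda>Q. if er_adj (span1 x) Q then 1 else 0::real) (span1 y))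
     = (?q - 1) * (\<Sum>P\<in>(er_vertices:: ('a\<times>'a\<times>'a) set set). if er_adj (span1 x) P then 1 else 0)"
    by (rule fiber_sum)
  moreover have "(\<Sum>y\<in>?U. (\<lambda>Q. if er_adj (span1 x) Q then 1 else 0::real) (span1 y))
     = (\<Sum>y\<in>?U. if dot3 x y = 0 then 1 else 0)"
    by (rule sum.cong) (auto simp: adj_iff[OF assms])
  moreover have "(\<Sum>y\<in>?U. if dot3 x y = 0 then 1 else 0::real) = real (card {y\<in>?U. dot3 x y = 0})"
    by (rule sum_ind) simp
  moreover have "{y\<in>?U. dot3 x y = 0} = {y. dot3 x y = 0} - {z3}" by auto
  moreover have "z3 \<in> {y. dot3 x y = 0}" by (cases x) simp
  ultimately have "real (card {y. dot3 x y = 0} - 1) = (?q - 1) * real (card {Q\<in>er_vertices. er_adj (span1 x) Q})"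
    by (simp add: sum_ind)
  moreover have "card {y. dot3 x y = 0} \<ge> 1" using card_ker[OF assms] q_ge2[where 'a='a]
    by (metis one_le_numeral one_le_power order_trans)
  ultimately have "?q^2 - 1 = (?q - 1) * real (card {Q\<in>er_vertices. er_adj (span1 x) Q})"
    using card_ker[OF assms] by (simp add: of_nat_diff)
  moreover have "?q^2 - 1 = (?q - 1) * (?q + 1)" by (simp add: algebra_simps power2_eq_square)
  moreover have "?q - 1 \<noteq> 0" using q_ge2[where 'a='a] by simp
  ultimately show ?thesis by simp
qed

lemma deg_V:
  assumes "P \<in> (er_vertices :: ('a::{finite,field}\<times>'a\<times>'a) set set)"
  shows "real (card {Q\<in>er_vertices. er_adj P Q}) = real (card (UNIV::'a set)) + 1"
    and "real (card {Q\<in>er_vertices. er_adj Q P}) = real (card (UNIV::'a set)) + 1"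
proof -
  obtain x where x: "x \<noteq> z3" "P = span1 x" using assms by (auto simp: vert_iff)
  show "real (card {Q\<in>er_vertices. er_adj P Q}) = real (card (UNIV::'a set)) + 1" using deg[OF x(1)] x(2) by simp
  then show "real (card {Q\<in>er_vertices. er_adj Q P}) = real (card (UNIV::'a set)) + 1"
    by (simp add: er_adj_sym)
qed

lemma common:
  assumes "P \<in> (er_vertices :: ('a::{finite,field}\<times>'a\<times>'a) set set)" "Q \<in> er_vertices" "P \<noteq> Q"
  shows "card {R\<in>er_vertices. er_adj R P \<and> er_adj R Q} \<le> 1"
proof -
  obtain x where x: "x \<noteq> z3" "P = span1 x" using assms by (auto simp: vert_iff)
  obtain y where y: "y \<noteq> z3" "Q = span1 y" using assms by (auto simp: vert_iff)
  let ?c = "cross3 x y"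
  have c0: "?c \<noteq> z3"
  proof
    assume "?c = z3"
    then obtain l where l: "y = smult3 l x" using cross_zero_par[OF x(1)] by blast
    then have "l \<noteq> 0" using y(1) by (cases x) auto
    then have "span1 x = span1 y" using span1_eq_iff[OF x(1)] l by blast
    then show False using assms(3) x y by simp
  qed
  have "{R\<in>er_vertices. er_adj R P \<and> er_adj R Q} \<subseteq> {span1 ?c}"
  proof
    fix R assume R: "R \<in> {R\<in>er_vertices. er_adj R P \<and> er_adj R Q}"
    then obtain z where z: "z \<noteq> z3" "R = span1 z" by (auto simp: vert_iff)
    have "dot3 z x = 0" "dot3 z y = 0" using R z x y adj_iff[OF z(1) x(1)] adj_iff[OF z(1) y(1)] by auto
    then have "cross3 z ?c = z3" by (rule triple_cross)
    then obtain l where l: "z = smult3 l ?c" using par[OF c0] by blast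
    then have "l \<noteq> 0" using z(1) by (cases ?c) auto
    then have "span1 ?c = span1 z" using span1_eq_iff[OF c0] l by blast
    then show "R \<in> {span1 ?c}" using z by simp
  qed
  then show ?thesis using card_mono[of "{span1 ?c}"] by simp
qed

lemma three_iso:
  fixes r p y w :: "'a::field\<times>'a\<times>'a"
  assumes "(1::'a) + 1 \<noteq> 0" "r \<noteq> z3" "dot3 r p = 0" "dot3 r y = 0" "dot3 r w = 0"
    "dot3 p p = 0" "dot3 y y = 0" "dot3 w w = 0"
  shows "dot3 p y * dot3 y w * dot3 w p = 0"
proof -
  have D: "dot3 p (cross3 y w) = 0"
  proof (cases "cross3 y w = z3")
    case True then show ?thesis by (cases p) simp
  next
    case False
    have "cross3 r (cross3 y w) = z3" using assms(4,5) by (rule triple_cross)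
    then obtain l where l: "r = smult3 l (cross3 y w)" using par[OF False] by blast
    then have "l \<noteq> 0" using assms(2) by (cases "cross3 y w") auto
    moreover have "l * dot3 p (cross3 y w) = 0" using assms(3) l by (simp add: dot3_comm dot3_smult_right)
    ultimately show ?thesis by simp
  qed
  obtain p1 p2 p3 where pp: "p = (p1,p2,p3)" by (cases p)
  obtain y1 y2 y3 where yy: "y = (y1,y2,y3)" by (cases y)
  obtain w1 w2 w3 where ww: "w = (w1,w2,w3)" by (cases w)
  have g: "(p1*(y2*w3 - y3*w2) + p2*(y3*w1 - y1*w3) + p3*(y1*w2 - y2*w1))^2 =
   (p1*p1+p2*p2+p3*p3)*(y1*y1+y2*y2+y3*y3)*(w1*w1+w2*w2+w3*w3)
   + (1+1)*((p1*y1+p2*y2+p3*y3)*(y1*w1+y2*w2+y3*w3)*(w1*p1+w2*p2+w3*p3))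
   - (p1*p1+p2*p2+p3*p3)*(y1*w1+y2*w2+y3*w3)^2
   - (y1*y1+y2*y2+y3*y3)*(w1*p1+w2*p2+w3*p3)^2
   - (w1*w1+w2*w2+w3*w3)*(p1*y1+p2*y2+p3*y3)^2"
    by algebra
  have "(1+1) * ((p1*y1+p2*y2+p3*y3)*(y1*w1+y2*w2+y3*w3)*(w1*p1+w2*p2+w3*p3)) = 0"
    using g D assms(6-8) pp yy ww by (simp only: dot3_simp cross3_simp) simp
  then show ?thesis using assms(1) pp yy ww by simp
qed



lemma final_ineq:
  fixes q s a t N r :: real
  assumes q: "q \<ge> 2" and t: "t = sqrt q" and N: "N = q^2 + q + 1" and s: "0 \<le> s"
    and a: "a \<le> q + 1" and r: "r = (q + t + 1) / N"
    and h: "(s*(q+1+t))^2 \<le> (s*(q+s) + 2*t*a + q*s) * N"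
  shows "s \<le> (t + sqrt (q + 4*(q+1)*r)) / (2*r)"
proof -
  have tt: "t*t = q" using t q by simp
  have tpos: "t > 0" using t q by simp
  have Npos: "N > 0" using N q by (simp add: add_pos_nonneg)
  have id: "(q+1+t)^2 = N + 2*t*(q+t+1)" using tt N by (simp add: algebra_simps power2_eq_square)
  have "s^2 * (N + 2*t*(q+t+1)) \<le> (s*(q+s) + 2*t*a + q*s) * N" using h id by (simp add: power_mult_distrib)
  moreover have "2*t*(N*(t*s + a)) = (2*t*a + 2*q*s)*N" using tt by (simp add: algebra_simps)
  moreover have "s^2 * (N + 2*t*(q+t+1)) = N*s^2 + 2*t*(s^2*(q+t+1))" by (simp add: algebra_simps)
  moreover have "(s*(q+s) + 2*t*a + q*s) * N = N*s^2 + (2*t*a + 2*q*s)*N" by (simp add: algebra_simps power2_eq_square)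
  ultimately have "2*t*(s^2*(q+t+1)) \<le> 2*t*(N*(t*s + a))" by linarith
  then have h2: "s^2*(q+t+1) \<le> N*(t*s + a)" using tpos by simp
  have "N*(t*s + a) \<le> N*(t*s + (q+1))" using a Npos by simp
  with h2 have "s^2*(q+t+1) \<le> N*(t*s + (q+1))" by linarith
  then have "(s^2*(q+t+1))/N \<le> t*s + (q+1)" using Npos by (simp add: pos_divide_le_eq mult.commute)
  moreover have "r * s^2 = (s^2*(q+t+1))/N" using r by simp
  ultimately have h3: "r * s^2 \<le> t*s + (q+1)" using Npos by simp
  have rpos: "r > 0" using r Npos tpos q by simp
  have "(2*r*s - t)^2 = 4*r*(r*s^2) - 4*r*s*t + t*t" by (simp add: algebra_simps power2_eq_square)
  also have "\<dots> \<le> 4*r*(t*s + (q+1)) - 4*r*s*t + t*t" using h3 rpos by simp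
  also have "\<dots> = q + 4*(q+1)*r" using tt by (simp add: algebra_simps)
  finally have "2*r*s - t \<le> sqrt (q + 4*(q+1)*r)" by (rule real_le_rsqrt)
  then have "2*r*s \<le> t + sqrt (q + 4*(q+1)*r)" by simp
  then show ?thesis using rpos by (simp add: field_simps)
qed


lemma my_cs:
  fixes f :: "'a \<Rightarrow> real"
  assumes "finite I"
  shows "(\<Sum>i\<in>I. f i)^2 \<le> (\<Sum>i\<in>I. (f i)^2) * real (card I)"
proof (cases "I = {}")
  case True then show ?thesis by simp
next
  case False
  define n where "n = real (card I)"
  have n: "n > 0" using False assms n_def by (simp add: card_gt_0_iff)
  define m where "m = (\<Sum>i\<in>I. f i) / n"
  have "0 \<le> (\<Sum>i\<in>I. (f i - m)^2)" by (simp add: sum_nonneg)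
  also have "\<dots> = (\<Sum>i\<in>I. (f i)^2) - 2*m*(\<Sum>i\<in>I. f i) + n*m^2"
    by (simp add: power2_diff sum.distrib sum_subtractf sum_distrib_left[symmetric] sum_distrib_right[symmetric] n_def algebra_simps)
  also have "\<dots> = (\<Sum>i\<in>I. (f i)^2) - (\<Sum>i\<in>I. f i)^2 / n"
    using n by (simp add: m_def power2_eq_square field_simps)
  finally have "(\<Sum>i\<in>I. f i)^2 / n \<le> (\<Sum>i\<in>I. (f i)^2)" by simp
  then show ?thesis using n by (simp add: pos_divide_le_eq n_def)
qed



lemma indep_facts:
  assumes "er_independent S"
  shows "S \<subseteq> er_vertices" "\<And>P Q. P \<in> S \<Longrightarrow> Q \<in> S \<Longrightarrow> P \<noteq> Q \<Longrightarrow> \<not> er_adj P Q"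
  using assms unfolding er_independent_def by auto

definition rep :: "('a::field\<times>'a\<times>'a) set \<Rightarrow> 'a\<times>'a\<times>'a" where
  "rep Q = (SOME y. y \<noteq> z3 \<and> Q = span1 y)"

lemma rep: "Q \<in> er_vertices \<Longrightarrow> rep Q \<noteq> z3 \<and> Q = span1 (rep Q)"
  unfolding rep_def vert_iff by (rule someI_ex) blast

lemma looped:
  fixes S :: "('a::{finite,field}\<times>'a\<times>'a) set set"
  assumes "er_independent S"
  shows "real (card {P\<in>S. er_adj P P}) \<le> real (card (UNIV::'a set)) + 1"
proof -
  let ?T = "{P\<in>S. er_adj P P}"
  let ?q = "real (card (UNIV::'a set))"
  note SV = indep_facts(1)[OF assms] and ind = indep_facts(2)[OF assms]
  show ?thesis
  proof (cases "(1::'a) + 1 = 0")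
    case True
    let ?o = "(1::'a,1::'a,1::'a)"
    have o0: "?o \<noteq> z3" by simp
    have "?T \<subseteq> {Q\<in>er_vertices. er_adj (span1 ?o) Q}"
    proof
      fix P assume P: "P \<in> ?T"
      then have "P \<in> er_vertices" using SV by auto
      then obtain x where x: "x \<noteq> z3" "P = span1 x" by (auto simp: vert_iff)
      obtain x1 x2 x3 where xx: "x = (x1,x2,x3)" by (cases x)
      have "dot3 x x = 0" using P x adj_iff[OF x(1) x(1)] by auto
      then have e: "x1*x1+x2*x2+x3*x3 = 0" using xx by simp
      have "(x1+x2+x3)*(x1+x2+x3) = x1*x1+x2*x2+x3*x3 + (1+1)*(x1*x2+x1*x3+x2*x3)" by algebra
      then have "(x1+x2+x3)*(x1+x2+x3) = 0" using e True by simp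
      then have "dot3 ?o x = 0" using xx by simp
      then show "P \<in> {Q\<in>er_vertices. er_adj (span1 ?o) Q}"
        using adj_iff[OF o0 x(1)] x \<open>P \<in> er_vertices\<close> by simp
    qed
    then have "card ?T \<le> card {Q\<in>er_vertices. er_adj (span1 ?o) Q}" by (rule card_mono[OF finite])
    then show ?thesis using deg[OF o0] by simp
  next
    case two: False
    show ?thesis
    proof (cases "?T = {}")
      case True then show ?thesis by (simp only: True card.empty)
    next
      case False
      then obtain P0 where P0: "P0 \<in> ?T" by blast
      have P0V: "P0 \<in> er_vertices" using P0 SV by auto
      define p where "p = rep P0"
      have p: "p \<noteq> z3" "P0 = span1 p" using rep[OF P0V] p_def by auto
      have pp: "dot3 p p = 0" using P0 p adj_iff[OF p(1) p(1)] by auto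
      define f where "f Q = span1 (cross3 p (rep Q))" for Q
      let ?N = "{Q\<in>er_vertices. er_adj P0 Q}"
      have facts: "rep Q \<noteq> z3 \<and> span1 (rep Q) = Q \<and> dot3 (rep Q) (rep Q) = 0 \<and> dot3 p (rep Q) \<noteq> 0
         \<and> cross3 p (rep Q) \<noteq> z3" if Q: "Q \<in> ?T - {P0}" for Q
      proof -
        have QV: "Q \<in> er_vertices" using Q SV by auto
        note r = rep[OF QV]
        have "dot3 (rep Q) (rep Q) = 0" using Q r adj_iff[of "rep Q" "rep Q"] by auto
        moreover have "dot3 p (rep Q) \<noteq> 0" using ind[of P0 Q] Q P0 p r adj_iff[OF p(1), of "rep Q"] by auto
        moreover have "cross3 p (rep Q) \<noteq> z3"
        proof
          assume "cross3 p (rep Q) = z3"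
          then obtain l where "rep Q = smult3 l p" using cross_zero_par[OF p(1)] by blast
          then have "dot3 p (rep Q) = 0" using pp by (simp add: dot3_smult_right)
          with \<open>dot3 p (rep Q) \<noteq> 0\<close> show False by simp
        qed
        ultimately show ?thesis using r by metis
      qed
      have maps: "f ` (?T - {P0}) \<subseteq> ?N - {P0}"
      proof
        fix R assume "R \<in> f ` (?T - {P0})"
        then obtain Q where Q: "Q \<in> ?T - {P0}" "R = f Q" by blast
        note fq = facts[OF Q(1)]
        let ?c = "cross3 p (rep Q)"
        have "?c \<noteq> z3" using fq by blast
        then have RV: "R \<in> er_vertices" using Q(2) f_def unfolding vert_iff by blast
        have c0: "?c \<noteq> z3" using fq by blast
        have "er_adj P0 R" using Q(2) f_def p adj_iff[OF p(1) c0] dot_cross1[of p "rep Q"] by simp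
        moreover have "R \<noteq> P0"
        proof
          assume "R = P0"
          have dd: "dot3 (rep Q) ?c = 0" by (rule dot_cross2)
          have "er_adj Q R" using fq Q(2) f_def adj_iff[of "rep Q" ?c] c0 dd by metis
          then have "er_adj Q P0" using \<open>R = P0\<close> by simp
          then show False using ind[of Q P0] Q P0 by auto
        qed
        ultimately show "R \<in> ?N - {P0}" using RV by simp
      qed
      have inj: "inj_on f (?T - {P0})"
      proof (rule inj_onI, rule ccontr)
        fix Q Q' assume Q: "Q \<in> ?T - {P0}" and Q': "Q' \<in> ?T - {P0}" and e: "f Q = f Q'" and ne: "Q \<noteq> Q'"
        note fq = facts[OF Q] and fq' = facts[OF Q']
        let ?y = "rep Q" and ?y' = "rep Q'"
        let ?c = "cross3 p ?y" and ?c' = "cross3 p ?y'"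
        have c0: "?c \<noteq> z3" using fq by blast
        have "span1 ?c = span1 ?c'" using e f_def by simp
        then obtain l where l: "?c' = smult3 l ?c" using span1_eq_iff[OF c0] by blast
        have "dot3 ?y' ?c' = 0" by (rule dot_cross2)
        moreover have "l \<noteq> 0" using l fq' by (cases ?c) auto
        ultimately have d3: "dot3 ?c ?y' = 0" using l by (simp add: dot3_smult_right dot3_comm)
        have d1: "dot3 ?c p = 0" using dot_cross1[of p ?y] dot3_comm[of ?c p] by simp
        have d2: "dot3 ?c ?y = 0" using dot_cross2[of ?y p] dot3_comm[of ?c ?y] by simp
        have "dot3 p ?y * dot3 ?y ?y' * dot3 ?y' p = 0"
          using three_iso[OF two c0 d1 d2 d3 pp] fq fq' by blast
        moreover have "dot3 ?y ?y' \<noteq> 0"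
        proof
          assume "dot3 ?y ?y' = 0"
          then have "er_adj Q Q'" using fq fq' adj_iff[of "rep Q" "rep Q'"] by simp
          then show False using ind[of Q Q'] Q Q' ne by auto
        qed
        moreover have "dot3 ?y' p \<noteq> 0" using fq' dot3_comm[of ?y' p] by simp
        ultimately show False using fq by simp
      qed
      have "card (?T - {P0}) \<le> card (?N - {P0})" by (rule card_inj_on_le[OF inj maps finite])
      moreover have "P0 \<in> ?N" using P0 P0V by simp
      moreover have "real (card ?N) = ?q + 1" using deg_V(1)[OF P0V] .
      ultimately have "real (card (?T - {P0})) \<le> ?q"
        by (simp add: card_Diff_singleton of_nat_diff)
      moreover have "card ?T > 0" using P0 by (auto simp: card_gt_0_iff)
      moreover have "card (?T - {P0}) = card ?T - 1" using card_Diff_singleton[OF P0] .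
      ultimately have "real (card ?T) \<le> ?q + 1" by (simp add: of_nat_diff)
      then show ?thesis by simp
    qed
  qed
qed




lemma h2_lemma:
  fixes S :: "('a::{finite, field} \<times> 'a \<times> 'a) set set"
  assumes SV: "S \<subseteq> er_vertices"
  shows "(\<Sum>v\<in>er_vertices. (\<Sum>P\<in>S. if er_adj v P then 1 else 0::real)^2)
     \<le> real (card S) * (real (card (UNIV::'a set)) + real (card S))"
proof -
  let ?V = "er_vertices :: ('a\<times>'a\<times>'a) set set"
  let ?q = "real (card (UNIV::'a set))"
  let ?s = "real (card S)"
  have "(\<Sum>v\<in>?V. (\<Sum>P\<in>S. if er_adj v P then 1 else 0::real)^2) = (\<Sum>v\<in>?V. \<Sum>P\<in>S. \<Sum>Q\<in>S. (if er_adj v P then 1 else 0::real) * (if er_adj v Q then 1 else 0))"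
    unfolding power2_eq_square by (simp only: sum_product)
  also have "\<dots> = (\<Sum>P\<in>S. \<Sum>v\<in>?V. \<Sum>Q\<in>S. (if er_adj v P then 1 else 0::real) * (if er_adj v Q then 1 else 0))"
    by (rule sum.swap)
  also have "\<dots> = (\<Sum>P\<in>S. \<Sum>Q\<in>S. \<Sum>v\<in>?V. (if er_adj v P then 1 else 0::real) * (if er_adj v Q then 1 else 0))"
    by (rule sum.cong[OF refl], rule sum.swap)
  also have "\<dots> \<le> (\<Sum>P\<in>S. \<Sum>Q\<in>S. (if P = Q then ?q + 1 else 1))"
  proof (rule sum_mono, rule sum_mono)
    fix P Q assume P: "P \<in> S" and Q: "Q \<in> S"
    have PV: "P \<in> ?V" and QV: "Q \<in> ?V" using P Q SV by auto
    have "(\<Sum>v\<in>?V. (if er_adj v P then 1 else 0::real) * (if er_adj v Q then 1 else 0))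
        = (\<Sum>v\<in>?V. if er_adj v P \<and> er_adj v Q then 1 else 0)"
      by (rule sum.cong) auto
    also have "\<dots> = real (card {v\<in>?V. er_adj v P \<and> er_adj v Q})" by (simp add: sum_ind)
    also have "\<dots> \<le> (if P = Q then ?q + 1 else 1)"
    proof (cases "P = Q")
      case True then show ?thesis using deg_V(2)[OF PV] by simp
    next
      case False then show ?thesis using common[OF PV QV False] by simp
    qed
    finally show "(\<Sum>v\<in>?V. (if er_adj v P then 1 else 0::real) * (if er_adj v Q then 1 else 0))
        \<le> (if P = Q then ?q + 1 else 1)" .
  qed
  also have "\<dots> = (\<Sum>P\<in>S. ?q + ?s)"
  proof (rule sum.cong[OF refl])
    fix P assume P: "P \<in> S"
    have "(\<Sum>Q\<in>S. (if P = Q then ?q + 1 else 1)) = (\<Sum>Q\<in>S. 1 + (if P = Q then ?q else 0))"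
      by (rule sum.cong) auto
    also have "\<dots> = ?s + ?q" using P by (simp add: sum.distrib)
    finally show "(\<Sum>Q\<in>S. (if P = Q then ?q + 1 else 1)) = ?q + ?s" by simp
  qed
  also have "\<dots> = ?s * (?q + ?s)" by simp
  finally show ?thesis .
qed

lemma main_aux:
  fixes S :: "('a::{finite, field} \<times> 'a \<times> 'a) set set"
  assumes "er_independent S"
  shows "let q = real (card (UNIV :: 'a set)); r = (q + sqrt q + 1) / (q^2 + q + 1)
         in real (card S) \<le> (sqrt q + sqrt (q + 4 * (q + 1) * r)) / (2 * r)"
proof -
  define q where "q = real (card (UNIV :: 'a set))"
  define t where "t = sqrt q"
  define N where "N = q^2 + q + 1"
  define r where "r = (q + t + 1) / N"
  define s where "s = real (card S)"
  define a where "a = real (card {P\<in>S. er_adj P P})"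
  let ?V = "er_vertices :: ('a\<times>'a\<times>'a) set set"
  note SV = indep_facts(1)[OF assms] and ind = indep_facts(2)[OF assms]
  have q2: "q \<ge> 2" using q_ge2[where 'a='a] q_def by simp
  have tt: "t*t = q" using q2 t_def by simp
  define d where "d v = (\<Sum>P\<in>S. if er_adj v P then 1 else 0::real)" for v
  define i where "i v = (if v \<in> S then 1 else 0::real)" for v
  define w where "w v = d v + t * i v" for v
  have h1: "(\<Sum>v\<in>?V. d v) = s * (q + 1)"
  proof -
    have "(\<Sum>v\<in>?V. d v) = (\<Sum>P\<in>S. \<Sum>v\<in>?V. if er_adj v P then 1 else 0::real)"
      unfolding d_def by (rule sum.swap)
    also have "\<dots> = (\<Sum>P\<in>S. q + 1)"
    proof (rule sum.cong[OF refl])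
      fix P assume "P \<in> S"
      then have PV: "P \<in> ?V" using SV by auto
      show "(\<Sum>v\<in>?V. if er_adj v P then 1 else 0::real) = q + 1"
        using deg_V(2)[OF PV] q_def by (simp add: sum_ind)
    qed
    finally show ?thesis using s_def by simp
  qed
  have h2: "(\<Sum>v\<in>?V. (d v)^2) \<le> s * (q + s)"
    using h2_lemma[OF SV] unfolding d_def q_def s_def .
  have h3: "(\<Sum>v\<in>?V. d v * i v) = a"
  proof -
    have "(\<Sum>v\<in>?V. d v * i v) = (\<Sum>v\<in>?V. if v \<in> S then d v else 0)"
      unfolding i_def by (rule sum.cong) auto
    also have "\<dots> = (\<Sum>v\<in>?V \<inter> S. d v)" by (simp add: sum.inter_restrict)
    also have "?V \<inter> S = S" using SV by auto
    also have "(\<Sum>v\<in>S. d v) = (\<Sum>v\<in>S. if er_adj v v then 1 else 0)"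
    proof (rule sum.cong[OF refl])
      fix v assume v: "v \<in> S"
      have "d v = (\<Sum>P\<in>S. if P = v then (if er_adj v v then 1 else 0) else 0)"
        unfolding d_def by (rule sum.cong[OF refl]) (use ind v in auto)
      also have "\<dots> = (if er_adj v v then 1 else 0)" using v by simp
      finally show "d v = (if er_adj v v then 1 else 0)" .
    qed
    also have "\<dots> = a" unfolding a_def by (simp add: sum_ind)
    finally show ?thesis .
  qed
  have h4: "(\<Sum>v\<in>?V. i v) = s"
  proof -
    have "(\<Sum>v\<in>?V. i v) = real (card {v\<in>?V. v \<in> S})" unfolding i_def by (simp add: sum_ind)
    also have "{v\<in>?V. v \<in> S} = S" using SV by auto
    finally show ?thesis using s_def by simp
  qed
  have sw: "(\<Sum>v\<in>?V. w v) = s * (q + 1 + t)"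
  proof -
    have "(\<Sum>v\<in>?V. w v) = (\<Sum>v\<in>?V. d v) + t * (\<Sum>v\<in>?V. i v)"
      unfolding w_def by (simp only: sum.distrib sum_distrib_left)
    then show ?thesis using h1 h4 by (simp add: algebra_simps)
  qed
  have iv: "i v * i v = i v" for v unfolding i_def by simp
  have sw2: "(\<Sum>v\<in>?V. (w v)^2) \<le> s*(q+s) + 2*t*a + q*s"
  proof -
    have "(\<Sum>v\<in>?V. (w v)^2) = (\<Sum>v\<in>?V. (d v)^2 + (2*t) * (d v * i v) + (t*t) * i v)"
    proof (rule sum.cong[OF refl])
      fix v
      have "(w v)^2 = (d v)^2 + (2*t) * (d v * i v) + (t*t) * (i v * i v)"
        unfolding w_def by (simp add: power2_eq_square algebra_simps)
      then show "(w v)^2 = (d v)^2 + (2*t) * (d v * i v) + (t*t) * i v" by (simp only: iv)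
    qed
    also have "\<dots> = (\<Sum>v\<in>?V. (d v)^2) + (2*t) * (\<Sum>v\<in>?V. d v * i v) + (t*t) * (\<Sum>v\<in>?V. i v)"
      by (simp only: sum.distrib sum_distrib_left)
    also have "\<dots> = (\<Sum>v\<in>?V. (d v)^2) + 2*t*a + q*s" using h3 h4 tt by simp
    finally show ?thesis using h2 by simp
  qed
  have cs: "(\<Sum>v\<in>?V. w v)^2 \<le> (\<Sum>v\<in>?V. (w v)^2) * real (card ?V)"
    by (rule my_cs) simp
  have cV: "real (card ?V) = N" using card_V[where 'a='a] q_def N_def by simp
  have Npos: "N > 0" using N_def q2 by (simp add: add_pos_nonneg)
  have "(\<Sum>v\<in>?V. (w v)^2) * N \<le> (s*(q+s) + 2*t*a + q*s) * N"
    using sw2 Npos by (intro mult_right_mono) auto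
  then have "(s*(q+1+t))^2 \<le> (s*(q+s) + 2*t*a + q*s) * N"
    using cs unfolding sw cV by linarith
  moreover have "a \<le> q + 1" using looped[OF assms] a_def q_def by simp
  ultimately have "s \<le> (t + sqrt (q + 4*(q+1)*r)) / (2*r)"
    by (intro final_ineq[OF q2 t_def N_def _ _ r_def]) (auto simp: s_def)
  then show ?thesis unfolding Let_def q_def[symmetric] s_def[symmetric] t_def[symmetric] N_def[symmetric] r_def[symmetric]
    by (simp only: r_def[symmetric] N_def[symmetric] t_def[symmetric])
qed



theorem mainTheorem10:
  fixes S :: "('a::{finite, field} \<times> 'a \<times> 'a) set set"
  assumes "er_independent S"
  shows "let q = real (card (UNIV :: 'a set)); r = (q + sqrt q + 1) / (q^2 + q + 1)
         in real (card S) \<le> (sqrt q + sqrt (q + 4 * (q + 1) * r)) / (2 * r)"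
  using main_aux[OF assms] .

end
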